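(* Let $Q$ be a blooming quantale and $\mathcal{F}\in\operatorname{mF}(Q)$. The following are equivalent: (a) $\mathcal{F}$ is normal over $Q$; (b) $\mathcal{F}$ is locally solid; (c) $\mathcal{F}$ is normal over every blooming $Q$-module.
   Context: A quantale is a poset $Q$ with all nonempty joins $\sum$ (no bottom required), top $1$, commutative associative multiplication with unit $1$ distributing over nonempty joins; a $Q$-module is a poset $M$ with all nonempty joins and an associative unital action distributing over nonempty joins in each variable ($Q$ is a module over itself). An m-filter is a subset of $Q$ containing $1$, upward closed and closed under multiplication. Write $x\le^*\sum_{i\in I}x_i$ if $x\le\sum_{i\in I_0}x_i$ for some finite nonempty $I_0\subseteq I$. $\mathcal{N}$ is normal over $M$ if for all $s\in\mathcal{N}$, $m\in M$ and families $(m_i)_{i\in I}$ in $M$ with $sm\le\sum_im_i$, there exist families $(m'_j)_{j\in J}$ in $M$ and $(s_j)_{j\in J}$ in $\mathcal{N}$ with $m\le\sum_jm'_j$ and $s_jm'_j\le^*\sum_im_i$ for all $j$. $\mathcal{F}$ is locally solid if there is a nonempty $W\subseteq Q$ with $\sum W=1$ such that for every $w\in W$ and every nonempty family $(x_i)$ with $\sum_ix_i\in\mathcal{F}$ there is $t\in\mathcal{F}$ with $tw\le^*\sum_ix_i$. Suspension: order nonempty subsets of a complete semilattice $L$ by $S\le T$ iff each $s\in S$ satisfies $s\le^*\sum T$; $\Sigma L$ is the poset of equivalence classes, $\sigma_L(S)=\sum S$; $\Sigma Q$ has product $S\cdot T=\{st\}$ and acts on $\Sigma M$ by $S\cdot A=\{sa\}$.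 A left adjoint of $\sigma_L$ is an order-preserving $\sigma_L^\flat$ with $\sigma_L^\flat(x)\le S\iff x\le\sigma_L(S)$. $Q$ is blooming if $\sigma_Q^\flat$ exists and $\sigma_Q^\flat(ab)=\sigma_Q^\flat(a)\cdot\sigma_Q^\flat(b)$; for blooming $Q$, $M$ is blooming if $\sigma_M^\flat$ exists and $\sigma_M^\flat(qm)=\sigma_Q^\flat(q)\cdot\sigma_M^\flat(m)$. *)

theory Defs
  imports Main
begin

definition poset_on :: "'a set \<Rightarrow> ('a \<Rightarrow> 'a \<Rightarrow> bool) \<Rightarrow> bool" where
  "poset_on C le \<longleftrightarrow>
     (\<forall>x\<in>C. le x x) \<and>
     (\<forall>x\<in>C. \<forall>y\<in>C. le x y \<and> le y x \<longrightarrow> x = y) \<and>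
     (\<forall>x\<in>C. \<forall>y\<in>C. \<forall>z\<in>C. le x y \<and> le y z \<longrightarrow> le x z)"

definition nejoins_on :: "'a set \<Rightarrow> ('a \<Rightarrow> 'a \<Rightarrow> bool) \<Rightarrow> ('a set \<Rightarrow> 'a) \<Rightarrow> bool" where
  "nejoins_on C le js \<longleftrightarrow>
     (\<forall>A. A \<noteq> {} \<and> A \<subseteq> C \<longrightarrow>
        js A \<in> C \<and> (\<forall>a\<in>A. le a (js A)) \<and>
        (\<forall>y\<in>C. (\<forall>a\<in>A. le a y) \<longrightarrow> le (js A) y))"

definition complete_semilattice :: "'a set \<Rightarrow> ('a \<Rightarrow> 'a \<Rightarrow> bool) \<Rightarrow> ('a set \<Rightarrow> 'a) \<Rightarrow> bool" where
  "complete_semilattice C le js \<longleftrightarrow> poset_on C le \<and> nejoins_on C le js"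

definition quantale ::
  "'a set \<Rightarrow> ('a \<Rightarrow> 'a \<Rightarrow> bool) \<Rightarrow> ('a set \<Rightarrow> 'a) \<Rightarrow> ('a \<Rightarrow> 'a \<Rightarrow> 'a) \<Rightarrow> 'a \<Rightarrow> bool" where
  "quantale Q le js mult one \<longleftrightarrow>
     complete_semilattice Q le js \<and>
     one \<in> Q \<and> (\<forall>x\<in>Q. le x one) \<and>
     (\<forall>x\<in>Q. \<forall>y\<in>Q. mult x y \<in> Q) \<and>
     (\<forall>x\<in>Q. \<forall>y\<in>Q. \<forall>z\<in>Q. mult (mult x y) z = mult x (mult y z)) \<and>
     (\<forall>x\<in>Q. \<forall>y\<in>Q. mult x y = mult y x) \<and>
     (\<forall>x\<in>Q. mult one x = x) \<and>
     (\<forall>x\<in>Q. \<forall>A. A \<noteq> {} \<and> A \<subseteq> Q \<longrightarrow> mult x (js A) = js ((mult x) ` A))"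

definition qmodule ::
  "'a set \<Rightarrow> ('a \<Rightarrow> 'a \<Rightarrow> bool) \<Rightarrow> ('a set \<Rightarrow> 'a) \<Rightarrow> ('a \<Rightarrow> 'a \<Rightarrow> 'a) \<Rightarrow> 'a \<Rightarrow>
   'm set \<Rightarrow> ('m \<Rightarrow> 'm \<Rightarrow> bool) \<Rightarrow> ('m set \<Rightarrow> 'm) \<Rightarrow> ('a \<Rightarrow> 'm \<Rightarrow> 'm) \<Rightarrow> bool" where
  "qmodule Q le js mult one M leM jsM act \<longleftrightarrow>
     quantale Q le js mult one \<and>
     complete_semilattice M leM jsM \<and>
     (\<forall>q\<in>Q. \<forall>m\<in>M. act q m \<in> M) \<and>
     (\<forall>p\<in>Q. \<forall>q\<in>Q. \<forall>m\<in>M. act (mult p q) m = act p (act q m)) \<and>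
     (\<forall>m\<in>M. act one m = m) \<and>
     (\<forall>q\<in>Q. \<forall>A. A \<noteq> {} \<and> A \<subseteq> M \<longrightarrow> act q (jsM A) = jsM ((act q) ` A)) \<and>
     (\<forall>m\<in>M. \<forall>B. B \<noteq> {} \<and> B \<subseteq> Q \<longrightarrow> act (js B) m = jsM ((\<lambda>q. act q m) ` B))"

definition mfilter :: "'a set \<Rightarrow> ('a \<Rightarrow> 'a \<Rightarrow> bool) \<Rightarrow> ('a \<Rightarrow> 'a \<Rightarrow> 'a) \<Rightarrow> 'a \<Rightarrow> 'a set \<Rightarrow> bool" where
  "mfilter Q le mult one F \<longleftrightarrow>
     F \<subseteq> Q \<and> one \<in> F \<and>
     (\<forall>x\<in>F. \<forall>y\<in>Q. le x y \<longrightarrow> y \<in> F) \<and>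
     (\<forall>x\<in>F. \<forall>y\<in>F. mult x y \<in> F)"

text \<open>x \<le>* sum of X: x is below the join of some finite nonempty subfamily.
Families are represented by their sets of members (repetitions are irrelevant for joins).\<close>
definition le_fin :: "('a \<Rightarrow> 'a \<Rightarrow> bool) \<Rightarrow> ('a set \<Rightarrow> 'a) \<Rightarrow> 'a \<Rightarrow> 'a set \<Rightarrow> bool" where
  "le_fin le js x X \<longleftrightarrow> (\<exists>X0. finite X0 \<and> X0 \<noteq> {} \<and> X0 \<subseteq> X \<and> le x (js X0))"

text \<open>Normality of a subset N of Q over a Q-module M. A family ((s_j, m'_j))_{j\<in>J}
is represented as a nonempty set P of pairs.\<close>
definition normal_over ::
  "'a set \<Rightarrow> 'm set \<Rightarrow> ('m \<Rightarrow> 'm \<Rightarrow> bool) \<Rightarrow> ('m set \<Rightarrow> 'm) \<Rightarrow> ('a \<Rightarrow> 'm \<Rightarrow> 'm) \<Rightarrow> bool" where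
  "normal_over N M leM jsM act \<longleftrightarrow>
     (\<forall>s\<in>N. \<forall>m\<in>M. \<forall>X. X \<noteq> {} \<and> X \<subseteq> M \<and> leM (act s m) (jsM X) \<longrightarrow>
        (\<exists>P. P \<noteq> {} \<and> P \<subseteq> N \<times> M \<and> leM m (jsM (snd ` P)) \<and>
             (\<forall>(t, m')\<in>P. le_fin leM jsM (act t m') X)))"

definition locally_solid ::
  "'a set \<Rightarrow> ('a \<Rightarrow> 'a \<Rightarrow> bool) \<Rightarrow> ('a set \<Rightarrow> 'a) \<Rightarrow> ('a \<Rightarrow> 'a \<Rightarrow> 'a) \<Rightarrow> 'a \<Rightarrow> 'a set \<Rightarrow> bool" where
  "locally_solid Q le js mult one F \<longleftrightarrow>
     (\<exists>W. W \<noteq> {} \<and> W \<subseteq> Q \<and> js W = one \<and>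
        (\<forall>w\<in>W. \<forall>X. X \<noteq> {} \<and> X \<subseteq> Q \<and> js X \<in> F \<longrightarrow>
           (\<exists>t\<in>F. le_fin le js (mult t w) X)))"

text \<open>Suspension: preorder on nonempty subsets of C (the quotient \<Sigma>L is handled via
representatives and the induced equivalence).\<close>
definition susp_le :: "('a \<Rightarrow> 'a \<Rightarrow> bool) \<Rightarrow> ('a set \<Rightarrow> 'a) \<Rightarrow> 'a set \<Rightarrow> 'a set \<Rightarrow> bool" where
  "susp_le le js S T \<longleftrightarrow> (\<forall>s\<in>S. le_fin le js s T)"

definition susp_eq :: "('a \<Rightarrow> 'a \<Rightarrow> bool) \<Rightarrow> ('a set \<Rightarrow> 'a) \<Rightarrow> 'a set \<Rightarrow> 'a set \<Rightarrow> bool" where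
  "susp_eq le js S T \<longleftrightarrow> susp_le le js S T \<and> susp_le le js T S"

text \<open>f is a left adjoint of \<sigma>_L (S \<mapsto> join S), given on representatives.\<close>
definition susp_left_adjoint ::
  "'a set \<Rightarrow> ('a \<Rightarrow> 'a \<Rightarrow> bool) \<Rightarrow> ('a set \<Rightarrow> 'a) \<Rightarrow> ('a \<Rightarrow> 'a set) \<Rightarrow> bool" where
  "susp_left_adjoint C le js f \<longleftrightarrow>
     (\<forall>x\<in>C. f x \<noteq> {} \<and> f x \<subseteq> C) \<and>
     (\<forall>x\<in>C. \<forall>y\<in>C. le x y \<longrightarrow> susp_le le js (f x) (f y)) \<and>
     (\<forall>x\<in>C. \<forall>S. S \<noteq> {} \<and> S \<subseteq> C \<longrightarrow> (susp_le le js (f x) S \<longleftrightarrow> le x (js S)))"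

definition blooming_quantale ::
  "'a set \<Rightarrow> ('a \<Rightarrow> 'a \<Rightarrow> bool) \<Rightarrow> ('a set \<Rightarrow> 'a) \<Rightarrow> ('a \<Rightarrow> 'a \<Rightarrow> 'a) \<Rightarrow> 'a \<Rightarrow> bool" where
  "blooming_quantale Q le js mult one \<longleftrightarrow>
     quantale Q le js mult one \<and>
     (\<exists>f. susp_left_adjoint Q le js f \<and>
        (\<forall>a\<in>Q. \<forall>b\<in>Q. susp_eq le js (f (mult a b)) {mult s t | s t. s \<in> f a \<and> t \<in> f b}))"

definition blooming_module ::
  "'a set \<Rightarrow> ('a \<Rightarrow> 'a \<Rightarrow> bool) \<Rightarrow> ('a set \<Rightarrow> 'a) \<Rightarrow> ('a \<Rightarrow> 'a \<Rightarrow> 'a) \<Rightarrow> 'a \<Rightarrow>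
   'm set \<Rightarrow> ('m \<Rightarrow> 'm \<Rightarrow> bool) \<Rightarrow> ('m set \<Rightarrow> 'm) \<Rightarrow> ('a \<Rightarrow> 'm \<Rightarrow> 'm) \<Rightarrow> bool" where
  "blooming_module Q le js mult one M leM jsM act \<longleftrightarrow>
     blooming_quantale Q le js mult one \<and>
     qmodule Q le js mult one M leM jsM act \<and>
     (\<exists>fQ fM. susp_left_adjoint Q le js fQ \<and> susp_left_adjoint M leM jsM fM \<and>
        (\<forall>q\<in>Q. \<forall>m\<in>M. susp_eq leM jsM (fM (act q m)) {act s a | s a. s \<in> fQ q \<and> a \<in> fM m}))"

end

theory Submission
  imports Defs
begin

context
  fixes C :: "'a set" and le :: "'a \<Rightarrow> 'a \<Rightarrow> bool" and js :: "'a set \<Rightarrow> 'a"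
  assumes cs: "complete_semilattice C le js"
begin

lemma cs_refl: "x \<in> C \<Longrightarrow> le x x"
  using cs unfolding complete_semilattice_def poset_on_def by blast

lemma cs_antisym: "x \<in> C \<Longrightarrow> y \<in> C \<Longrightarrow> le x y \<Longrightarrow> le y x \<Longrightarrow> x = y"
  using cs unfolding complete_semilattice_def poset_on_def by blast

lemma cs_trans: "x \<in> C \<Longrightarrow> y \<in> C \<Longrightarrow> z \<in> C \<Longrightarrow> le x y \<Longrightarrow> le y z \<Longrightarrow> le x z"
  using cs unfolding complete_semilattice_def poset_on_def by blast

lemma cs_js: "A \<noteq> {} \<Longrightarrow> A \<subseteq> C \<Longrightarrow> js A \<in> C"
  using cs unfolding complete_semilattice_def nejoins_on_def by blast

lemma cs_ub: "A \<noteq> {} \<Longrightarrow> A \<subseteq> C \<Longrightarrow> a \<in> A \<Longrightarrow> le a (js A)"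
  using cs unfolding complete_semilattice_def nejoins_on_def by blast

lemma cs_lub: "A \<noteq> {} \<Longrightarrow> A \<subseteq> C \<Longrightarrow> y \<in> C \<Longrightarrow> (\<And>a. a \<in> A \<Longrightarrow> le a y) \<Longrightarrow> le (js A) y"
proof -
  assume a: "A \<noteq> {}" "A \<subseteq> C" "y \<in> C" "\<And>a. a \<in> A \<Longrightarrow> le a y"
  have "nejoins_on C le js" using cs unfolding complete_semilattice_def by (elim conjE)
  then have "\<forall>y\<in>C. (\<forall>a\<in>A. le a y) \<longrightarrow> le (js A) y"
    using a(1,2) unfolding nejoins_on_def by (elim allE[of _ A]) simp
  then show ?thesis using a by blast
qed

lemma cs_pair: "x \<in> C \<Longrightarrow> y \<in> C \<Longrightarrow> le x y \<Longrightarrow> js {x, y} = y"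
  apply (rule cs_antisym)
  apply (rule cs_js; auto)
  apply simp
  apply (rule cs_lub; auto intro: cs_refl)
  apply (rule cs_ub; auto)
  done

lemma cs_subset: "A \<noteq> {} \<Longrightarrow> A \<subseteq> B \<Longrightarrow> B \<subseteq> C \<Longrightarrow> le (js A) (js B)"
  apply (rule cs_lub)
  apply auto[2]
  apply (rule cs_js; auto)
  apply (rule cs_ub; auto)
  done

lemma le_fin_trans: "x \<in> C \<Longrightarrow> y \<in> C \<Longrightarrow> X \<subseteq> C \<Longrightarrow> le x y \<Longrightarrow> le_fin le js y X \<Longrightarrow> le_fin le js x X"
  unfolding le_fin_def
  using cs_js cs_trans subset_trans by (smt (verit))

lemma le_fin_union:
  assumes "finite Y" "Y \<noteq> {}" "Y \<subseteq> C" "X \<subseteq> C" "\<And>y. y \<in> Y \<Longrightarrow> le_fin le js y X"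
  shows "le_fin le js (js Y) X"
proof -
  have "\<forall>y\<in>Y. \<exists>X0. finite X0 \<and> X0 \<noteq> {} \<and> X0 \<subseteq> X \<and> le y (js X0)"
    using assms(5) unfolding le_fin_def by blast
  then obtain G where G: "\<And>y. y \<in> Y \<Longrightarrow> finite (G y) \<and> G y \<noteq> {} \<and> G y \<subseteq> X \<and> le y (js (G y))"
    by metis
  define U where "U = \<Union>(G ` Y)"
  have U: "finite U" "U \<noteq> {}" "U \<subseteq> X" using G assms(1,2) unfolding U_def by auto
  have UC: "U \<subseteq> C" using U assms(4) by auto
  have "le (js Y) (js U)"
  proof (rule cs_lub)
    show "Y \<noteq> {}" "Y \<subseteq> C" by fact+
    show "js U \<in> C" using U UC cs_js by auto
    fix y assume y: "y \<in> Y"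
    have "le (js (G y)) (js U)"
      using cs_subset[of "G y" U] G[OF y] UC unfolding U_def using y by auto
    moreover have "js (G y) \<in> C" using cs_js[of "G y"] G[OF y] assms(4) by auto
    moreover have "js U \<in> C" using U UC cs_js by auto
    moreover have "y \<in> C" using y assms(3) by auto
    ultimately show "le y (js U)"
      using cs_trans[of y "js (G y)" "js U"] G[OF y] by blast
  qed
  then show ?thesis unfolding le_fin_def using U by blast
qed

lemma le_fin_susp:
  assumes "le_fin le js s T" "T \<subseteq> C" "X \<subseteq> C" "s \<in> C" "\<And>t. t \<in> T \<Longrightarrow> le_fin le js t X"
  shows "le_fin le js s X"
proof -
  obtain T0 where T0: "finite T0" "T0 \<noteq> {}" "T0 \<subseteq> T" "le s (js T0)"
    using assms(1) unfolding le_fin_def by blast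
  have "le_fin le js (js T0) X"
    using le_fin_union[of T0 X] T0 assms by auto
  then show ?thesis using le_fin_trans[of s "js T0" X] T0 assms cs_js by auto
qed

lemma adj_le_fin:
  assumes "susp_left_adjoint C le js f" "x \<in> C" "a \<in> f x" "S \<noteq> {}" "S \<subseteq> C" "le x (js S)"
  shows "le_fin le js a S"
  using assms unfolding susp_left_adjoint_def susp_le_def by blast

lemma adj_below:
  assumes "susp_left_adjoint C le js f" "x \<in> C"
  shows "le x (js (f x))"
proof -
  have fx: "f x \<noteq> {}" "f x \<subseteq> C" using assms unfolding susp_left_adjoint_def by auto
  have "susp_le le js (f x) (f x)"
    unfolding susp_le_def le_fin_def
  proof
    fix a assume a: "a \<in> f x"
    show "\<exists>X0. finite X0 \<and> X0 \<noteq> {} \<and> X0 \<subseteq> f x \<and> le a (js X0)"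
      by (rule exI[of _ "{a}"]) (use a fx cs_ub in auto)
  qed
  then show ?thesis using assms fx unfolding susp_left_adjoint_def by blast
qed

end


lemma quantale_cs: "quantale Q le js mult one \<Longrightarrow> complete_semilattice Q le js"
  unfolding quantale_def by (elim conjE)

lemma quantale_fields_1:
  assumes "quantale Q le js mult one"
  shows "one \<in> Q"
  using assms unfolding quantale_def by (elim conjE)

lemma quantale_fields_2:
  assumes "quantale Q le js mult one"
  shows "\<forall>x\<in>Q. le x one"
  using assms unfolding quantale_def by (elim conjE)

lemma quantale_fields_3:
  assumes "quantale Q le js mult one"
  shows "\<forall>x\<in>Q. \<forall>y\<in>Q. mult x y \<in> Q"
  using assms unfolding quantale_def by (elim conjE)

lemma quantale_fields_4:
  assumes "quantale Q le js mult one"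
  shows "\<forall>x\<in>Q. \<forall>y\<in>Q. \<forall>z\<in>Q. mult (mult x y) z = mult x (mult y z)"
  using assms unfolding quantale_def by (elim conjE)

lemma quantale_fields_5:
  assumes "quantale Q le js mult one"
  shows "\<forall>x\<in>Q. \<forall>y\<in>Q. mult x y = mult y x"
  using assms unfolding quantale_def by (elim conjE)

lemma quantale_fields_6:
  assumes "quantale Q le js mult one"
  shows "\<forall>x\<in>Q. mult one x = x"
  using assms unfolding quantale_def by (elim conjE)

lemma quantale_fields_7:
  assumes "quantale Q le js mult one"
  shows "\<forall>x\<in>Q. \<forall>A. A \<noteq> {} \<and> A \<subseteq> Q \<longrightarrow> mult x (js A) = js ((mult x) ` A)"
  using assms unfolding quantale_def by (elim conjE)

lemmas quantale_fields = quantale_fields_1 quantale_fields_2 quantale_fields_3 quantale_fields_4 quantale_fields_5 quantale_fields_6 quantale_fields_7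

lemma qmodule_csM: "qmodule Q le js mult one M leM jsM act \<Longrightarrow> complete_semilattice M leM jsM"
  unfolding qmodule_def by (elim conjE)

lemma qmodule_q: "qmodule Q le js mult one M leM jsM act \<Longrightarrow> quantale Q le js mult one"
  unfolding qmodule_def by (elim conjE)

lemma qmodule_fields_1:
  assumes "qmodule Q le js mult one M leM jsM act"
  shows "\<forall>q\<in>Q. \<forall>m\<in>M. act q m \<in> M"
  using assms unfolding qmodule_def by (elim conjE)

lemma qmodule_fields_2:
  assumes "qmodule Q le js mult one M leM jsM act"
  shows "\<forall>p\<in>Q. \<forall>q\<in>Q. \<forall>m\<in>M. act (mult p q) m = act p (act q m)"
  using assms unfolding qmodule_def by (elim conjE)

lemma qmodule_fields_3:
  assumes "qmodule Q le js mult one M leM jsM act"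
  shows "\<forall>m\<in>M. act one m = m"
  using assms unfolding qmodule_def by (elim conjE)

lemma qmodule_fields_4:
  assumes "qmodule Q le js mult one M leM jsM act"
  shows "\<forall>q\<in>Q. \<forall>A. A \<noteq> {} \<and> A \<subseteq> M \<longrightarrow> act q (jsM A) = jsM ((act q) ` A)"
  using assms unfolding qmodule_def by (elim conjE)

lemma qmodule_fields_5:
  assumes "qmodule Q le js mult one M leM jsM act"
  shows "\<forall>m\<in>M. \<forall>B. B \<noteq> {} \<and> B \<subseteq> Q \<longrightarrow> act (js B) m = jsM ((\<lambda>q. act q m) ` B)"
  using assms unfolding qmodule_def by (elim conjE)

lemmas qmodule_fields = qmodule_fields_1 qmodule_fields_2 qmodule_fields_3 qmodule_fields_4 qmodule_fields_5

context
  fixes Q :: "'a set" and le :: "'a \<Rightarrow> 'a \<Rightarrow> bool" and js :: "'a set \<Rightarrow> 'a"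
    and mult :: "'a \<Rightarrow> 'a \<Rightarrow> 'a" and one :: 'a
    and M :: "'m set" and leM :: "'m \<Rightarrow> 'm \<Rightarrow> bool" and jsM :: "'m set \<Rightarrow> 'm"
    and act :: "'a \<Rightarrow> 'm \<Rightarrow> 'm"
  assumes qm: "qmodule Q le js mult one M leM jsM act"
begin

lemma act_closed: "q \<in> Q \<Longrightarrow> m \<in> M \<Longrightarrow> act q m \<in> M"
  using qmodule_fields(1)[OF qm] by blast

lemma act_mono1:
  assumes "x \<in> Q" "y \<in> Q" "le x y" "a \<in> M"
  shows "leM (act x a) (act y a)"
proof -
  have csQ: "complete_semilattice Q le js" by (rule quantale_cs[OF qmodule_q[OF qm]])
  have csM: "complete_semilattice M leM jsM" by (rule qmodule_csM[OF qm])
  have e: "js {x, y} = y" using cs_pair[OF csQ] assms by blast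
  have d: "\<forall>m\<in>M. \<forall>B. B \<noteq> {} \<and> B \<subseteq> Q \<longrightarrow> act (js B) m = jsM ((\<lambda>q. act q m) ` B)"
    by (rule qmodule_fields(5)[OF qm])
  have s: "{x, y} \<noteq> {} \<and> {x, y} \<subseteq> Q" using assms by blast
  have "act (js {x, y}) a = jsM ((\<lambda>q. act q a) ` {x, y})"
    using spec[OF bspec[OF d assms(4)], of "{x, y}"] s by (rule mp)
  then have e2: "act y a = jsM ((\<lambda>q. act q a) ` {x, y})" using e by simp
  have S: "(\<lambda>q. act q a) ` {x, y} \<noteq> {}" "(\<lambda>q. act q a) ` {x, y} \<subseteq> M"
    "act x a \<in> (\<lambda>q. act q a) ` {x, y}"
    using assms act_closed by auto
  show ?thesis unfolding e2 by (rule cs_ub[OF csM S])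
qed

lemma act_mono2:
  assumes "a \<in> M" "b \<in> M" "leM a b" "q \<in> Q"
  shows "leM (act q a) (act q b)"
proof -
  have csM: "complete_semilattice M leM jsM" by (rule qmodule_csM[OF qm])
  have e: "jsM {a, b} = b" using cs_pair[OF csM] assms by blast
  have d: "\<forall>q\<in>Q. \<forall>A. A \<noteq> {} \<and> A \<subseteq> M \<longrightarrow> act q (jsM A) = jsM ((act q) ` A)"
    by (rule qmodule_fields(4)[OF qm])
  have s: "{a, b} \<noteq> {} \<and> {a, b} \<subseteq> M" using assms by blast
  have "act q (jsM {a, b}) = jsM (act q ` {a, b})"
    using spec[OF bspec[OF d assms(4)], of "{a, b}"] s by (rule mp)
  then have e2: "act q b = jsM (act q ` {a, b})" using e by simp
  have S: "act q ` {a, b} \<noteq> {}" "act q ` {a, b} \<subseteq> M" "act q a \<in> act q ` {a, b}"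
    using assms act_closed by auto
  show ?thesis unfolding e2 by (rule cs_ub[OF csM S])
qed

end

lemma quantale_self_module:
  assumes "quantale Q le js mult one"
  shows "qmodule Q le js mult one Q le js mult"
proof -
  note qf = quantale_fields[OF assms]
  have c: "\<forall>x\<in>Q. \<forall>y\<in>Q. mult x y = mult y x" by (rule qf(5))
  have d: "\<forall>x\<in>Q. \<forall>A. A \<noteq> {} \<and> A \<subseteq> Q \<longrightarrow> mult x (js A) = js ((mult x) ` A)" by (rule qf(7))
  have e: "\<forall>m\<in>Q. \<forall>B. B \<noteq> {} \<and> B \<subseteq> Q \<longrightarrow> mult (js B) m = js ((\<lambda>q. mult q m) ` B)"
  proof (intro ballI allI impI)
    fix m B assume m: "m \<in> Q" and B: "B \<noteq> {} \<and> B \<subseteq> Q"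
    have jB: "js B \<in> Q" using cs_js[OF quantale_cs[OF assms]] B by simp
    have "mult (js B) m = mult m (js B)" using bspec[OF bspec[OF c jB] m] .
    also have "\<dots> = js (mult m ` B)" using spec[OF bspec[OF d m], of B] B by (rule mp)
    also have "mult m ` B = (\<lambda>q. mult q m) ` B"
    proof (rule image_cong[OF refl])
      fix q assume "q \<in> B" then have "q \<in> Q" using B by auto
      then show "mult m q = mult q m" using bspec[OF bspec[OF c m]] by simp
    qed
    finally show "mult (js B) m = js ((\<lambda>q. mult q m) ` B)" .
  qed
  show ?thesis unfolding qmodule_def
    apply (intro conjI)
    apply (rule assms)
    apply (rule quantale_cs[OF assms])
    apply (rule qf(3))
    apply (rule qf(4))
    apply (rule qf(6))
    apply (rule qf(7))
    apply (rule e)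
    done
qed

lemma quantale_mult_le:
  assumes q: "quantale Q le js mult one" and xy: "x \<in> Q" "y \<in> Q"
  shows "le (mult x y) y" "le (mult x y) x"
proof -
  note qf = quantale_fields[OF q]
  have qm: "qmodule Q le js mult one Q le js mult" by (rule quantale_self_module[OF q])
  have one: "one \<in> Q" by (rule qf(1))
  have lx: "le x one" "le y one" using qf(2) xy by auto
  have u: "mult one y = y" "mult one x = x" using qf(6) xy by auto
  have c: "mult x y = mult y x" using qf(5) xy by auto
  show "le (mult x y) y" using act_mono1[OF qm xy(1) one lx(1) xy(2)] u by simp
  show "le (mult x y) x" using act_mono1[OF qm xy(2) one lx(2) xy(1)] u c by simp
qed

lemma b_to_c:
  fixes Q :: "'a set" and le :: "'a \<Rightarrow> 'a \<Rightarrow> bool" and js :: "'a set \<Rightarrow> 'a"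
    and mult :: "'a \<Rightarrow> 'a \<Rightarrow> 'a" and one :: 'a
    and M :: "'m set" and leM :: "'m \<Rightarrow> 'm \<Rightarrow> bool" and jsM :: "'m set \<Rightarrow> 'm"
    and act :: "'a \<Rightarrow> 'm \<Rightarrow> 'm"
  assumes Ff: "mfilter Q le mult one F"
    and ls: "locally_solid Q le js mult one F"
    and bm: "blooming_module Q le js mult one M leM jsM act"
  shows "normal_over F M leM jsM act"
  unfolding normal_over_def
proof (intro ballI allI impI)
  have qm: "qmodule Q le js mult one M leM jsM act" using bm unfolding blooming_module_def by (elim conjE)
  have q: "quantale Q le js mult one" by (rule qmodule_q[OF qm])
  have csQ: "complete_semilattice Q le js" by (rule quantale_cs[OF q])
  have csM: "complete_semilattice M leM jsM" by (rule qmodule_csM[OF qm])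
  have ex: "\<exists>fQ fM. susp_left_adjoint Q le js fQ \<and> susp_left_adjoint M leM jsM fM \<and>
        (\<forall>q\<in>Q. \<forall>m\<in>M. susp_eq leM jsM (fM (act q m)) {act s a | s a. s \<in> fQ q \<and> a \<in> fM m})"
    using bm unfolding blooming_module_def by (elim conjE)
  then obtain fQ fM where fQ: "susp_left_adjoint Q le js fQ" and fM: "susp_left_adjoint M leM jsM fM"
    and fact0: "\<forall>q\<in>Q. \<forall>m\<in>M. susp_eq leM jsM (fM (act q m)) {act s a | s a. s \<in> fQ q \<and> a \<in> fM m}"
    by (elim exE conjE)
  have fact: "\<And>q m. q \<in> Q \<Longrightarrow> m \<in> M \<Longrightarrow>
       susp_eq leM jsM (fM (act q m)) {act s a | s a. s \<in> fQ q \<and> a \<in> fM m}"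
    using fact0 by simp
  obtain W where W: "W \<noteq> {}" "W \<subseteq> Q" "js W = one"
    and Wp0: "\<forall>w\<in>W. \<forall>X. X \<noteq> {} \<and> X \<subseteq> Q \<and> js X \<in> F \<longrightarrow>
           (\<exists>t\<in>F. le_fin le js (mult t w) X)"
    using ls unfolding locally_solid_def by (elim exE conjE)
  have Wp: "\<And>w X. w \<in> W \<Longrightarrow> X \<noteq> {} \<Longrightarrow> X \<subseteq> Q \<Longrightarrow> js X \<in> F \<Longrightarrow>
       \<exists>t\<in>F. le_fin le js (mult t w) X"
    using Wp0 by simp
  have FQ: "F \<subseteq> Q" using Ff unfolding mfilter_def by (elim conjE)
  have Fup0: "\<forall>x\<in>F. \<forall>y\<in>Q. le x y \<longrightarrow> y \<in> F"
    using Ff unfolding mfilter_def by (elim conjE)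
  have Fup: "\<And>x y. x \<in> F \<Longrightarrow> y \<in> Q \<Longrightarrow> le x y \<Longrightarrow> y \<in> F" using Fup0 by meson
  have one: "one \<in> Q" by (rule quantale_fields(1)[OF q])
  have actmult: "\<And>p q m. p \<in> Q \<Longrightarrow> q \<in> Q \<Longrightarrow> m \<in> M \<Longrightarrow> act (mult p q) m = act p (act q m)"
    using qmodule_fields(2)[OF qm] by simp
  have actone: "\<And>m. m \<in> M \<Longrightarrow> act one m = m" using qmodule_fields(3)[OF qm] by simp
  have actjs1: "\<And>m B. m \<in> M \<Longrightarrow> B \<noteq> {} \<Longrightarrow> B \<subseteq> Q \<Longrightarrow> act (js B) m = jsM ((\<lambda>q. act q m) ` B)"
    using qmodule_fields(5)[OF qm] by simp
  have actjs2: "\<And>q A. q \<in> Q \<Longrightarrow> A \<noteq> {} \<Longrightarrow> A \<subseteq> M \<Longrightarrow> act q (jsM A) = jsM (act q ` A)"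
    using qmodule_fields(4)[OF qm] by simp
  have multQ: "\<And>x y. x \<in> Q \<Longrightarrow> y \<in> Q \<Longrightarrow> mult x y \<in> Q" using quantale_fields(3)[OF q] by simp
  have fQs: "\<And>x. x \<in> Q \<Longrightarrow> fQ x \<noteq> {} \<and> fQ x \<subseteq> Q" using fQ unfolding susp_left_adjoint_def by blast
  have fMs: "\<And>x. x \<in> M \<Longrightarrow> fM x \<noteq> {} \<and> fM x \<subseteq> M" using fM unfolding susp_left_adjoint_def by blast

  fix s m X
  assume s: "s \<in> F" and m: "m \<in> M" and X: "X \<noteq> {} \<and> X \<subseteq> M \<and> leM (act s m) (jsM X)"
  have sQ: "s \<in> Q" using s FQ by blast
  have sm: "act s m \<in> M" using act_closed[OF qm] sQ m by blast
  have h1: "susp_le leM jsM (fM (act s m)) X"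
    using fM sm X unfolding susp_left_adjoint_def by blast
  have h2: "le_fin leM jsM (act s' a) X" if s': "s' \<in> fQ s" and a: "a \<in> fM m" for s' a
  proof -
    have "susp_le leM jsM {act u v | u v. u \<in> fQ s \<and> v \<in> fM m} (fM (act s m))"
      using fact[OF sQ m] unfolding susp_eq_def by (elim conjE)
    then have "le_fin leM jsM (act s' a) (fM (act s m))" using s' a unfolding susp_le_def by blast
    moreover have "act s' a \<in> M" using act_closed[OF qm] fQs[OF sQ] fMs[OF m] s' a by blast
    ultimately show ?thesis
      using le_fin_susp[OF csM, of "act s' a" "fM (act s m)" X] h1 fMs[OF sm] X
      unfolding susp_le_def by blast
  qed
  have jsF: "js (fQ s) \<in> F"
    using Fup[OF s] cs_js[OF csQ] fQs[OF sQ] adj_below[OF csQ fQ sQ] by blast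
  have "\<forall>w\<in>W. \<exists>t\<in>F. le_fin le js (mult t w) (fQ s)"
    using Wp fQs[OF sQ] jsF by blast
  then obtain T where T: "\<And>w. w \<in> W \<Longrightarrow> T w \<in> F \<and> le_fin le js (mult (T w) w) (fQ s)"
    by metis
  define P where "P = (\<lambda>(w, a). (T w, act w a)) ` (W \<times> fM m)"
  have h5: "le_fin leM jsM (act (T w) (act w a)) X" if w: "w \<in> W" and a: "a \<in> fM m" for w a
  proof -
    have wQ: "w \<in> Q" using w W by blast
    have TQ: "T w \<in> Q" using T[OF w] FQ by blast
    have aM: "a \<in> M" using a fMs[OF m] by blast
    obtain S0 where S0: "finite S0" "S0 \<noteq> {}" "S0 \<subseteq> fQ s" "le (mult (T w) w) (js S0)"
      using T[OF w] unfolding le_fin_def by blast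
    have S0Q: "S0 \<subseteq> Q" using S0 fQs[OF sQ] by blast
    have e1: "act (T w) (act w a) = act (mult (T w) w) a" using actmult wQ TQ aM by simp
    have e2: "leM (act (mult (T w) w) a) (act (js S0) a)"
      using act_mono1[OF qm] multQ[OF TQ wQ] cs_js[OF csQ] S0 S0Q aM by blast
    have e3: "act (js S0) a = jsM ((\<lambda>q. act q a) ` S0)" using actjs1 aM S0 S0Q by blast
    have imM: "(\<lambda>q. act q a) ` S0 \<subseteq> M" using act_closed[OF qm] S0Q aM by blast
    have e4: "le_fin leM jsM (jsM ((\<lambda>q. act q a) ` S0)) X"
      apply (rule le_fin_union[OF csM])
      using S0 imM X h2 a by auto
    have m1: "act (mult (T w) w) a \<in> M" using act_closed[OF qm] multQ[OF TQ wQ] aM by blast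
    have m2: "act (js S0) a \<in> M" using act_closed[OF qm] cs_js[OF csQ] S0 S0Q aM by blast
    have XM: "X \<subseteq> M" using X by blast
    show ?thesis unfolding e1
      by (rule le_fin_trans[OF csM m1 m2 XM e2]) (simp add: e3 e4)
  qed
  show "\<exists>P. P \<noteq> {} \<and> P \<subseteq> F \<times> M \<and> leM m (jsM (snd ` P)) \<and>
             (\<forall>(t, m')\<in>P. le_fin leM jsM (act t m') X)"
  proof (intro exI conjI)
    show "P \<noteq> {}" unfolding P_def using W fMs[OF m] by auto
    show "P \<subseteq> F \<times> M" unfolding P_def using T act_closed[OF qm] W fMs[OF m] by fastforce
    show "\<forall>(t, m')\<in>P. le_fin leM jsM (act t m') X" unfolding P_def using h5 by auto
    define Z where "Z = snd ` P"
    have Z: "Z = (\<lambda>(w, a). act w a) ` (W \<times> fM m)" unfolding Z_def P_def by force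
    have ZM: "Z \<subseteq> M" "Z \<noteq> {}" unfolding Z using act_closed[OF qm] W fMs[OF m] by auto
    have jZ: "jsM Z \<in> M" using cs_js[OF csM] ZM by blast
    have "m = act (js W) m" using actone m W by simp
    also have "\<dots> = jsM ((\<lambda>q. act q m) ` W)" using actjs1 m W by blast
    finally have mW: "m = jsM ((\<lambda>q. act q m) ` W)" .
    have "leM (jsM ((\<lambda>q. act q m) ` W)) (jsM Z)"
    proof (rule cs_lub[OF csM])
      show "(\<lambda>q. act q m) ` W \<noteq> {}" "(\<lambda>q. act q m) ` W \<subseteq> M" "jsM Z \<in> M"
        using W act_closed[OF qm] m jZ by auto
      fix b assume "b \<in> (\<lambda>q. act q m) ` W"
      then obtain w where w: "w \<in> W" and b: "b = act w m" by blast
      have wQ: "w \<in> Q" using w W by blast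
      have jf: "jsM (fM m) \<in> M" using cs_js[OF csM] fMs[OF m] by blast
      have i1: "leM (act w m) (act w (jsM (fM m)))"
        using act_mono2[OF qm] m jf adj_below[OF csM fM m] wQ by blast
      have i2: "act w (jsM (fM m)) = jsM (act w ` fM m)" using actjs2 wQ fMs[OF m] by blast
      have i3: "leM (jsM (act w ` fM m)) (jsM Z)"
        apply (rule cs_subset[OF csM])
        using fMs[OF m] ZM w unfolding Z by auto
      have m3: "act w (jsM (fM m)) \<in> M" using act_closed[OF qm] wQ jf by blast
      show "leM b (jsM Z)" unfolding b
        apply (rule cs_trans[OF csM _ m3 jZ i1])
        using act_closed[OF qm] wQ m i2 i3 by auto
    qed
    then show "leM m (jsM (snd ` P))" using mW Z_def by simp
  qed
qed


lemma a_to_b: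
  fixes Q :: "'a set" and le :: "'a \<Rightarrow> 'a \<Rightarrow> bool" and js :: "'a set \<Rightarrow> 'a"
    and mult :: "'a \<Rightarrow> 'a \<Rightarrow> 'a" and one :: 'a
  assumes bq: "blooming_quantale Q le js mult one"
    and Ff: "mfilter Q le mult one F"
    and nq: "normal_over F Q le js mult"
  shows "locally_solid Q le js mult one F"
proof -
  have q: "quantale Q le js mult one" using bq unfolding blooming_quantale_def by (elim conjE)
  have csQ: "complete_semilattice Q le js" by (rule quantale_cs[OF q])
  have qm: "qmodule Q le js mult one Q le js mult" by (rule quantale_self_module[OF q])
  have "\<exists>f. susp_left_adjoint Q le js f \<and>
        (\<forall>a\<in>Q. \<forall>b\<in>Q. susp_eq le js (f (mult a b)) {mult s t | s t. s \<in> f a \<and> t \<in> f b})"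
    using bq unfolding blooming_quantale_def by (elim conjE)
  then obtain f where f: "susp_left_adjoint Q le js f" by (elim exE conjE)
  have FQ: "F \<subseteq> Q" using Ff unfolding mfilter_def by (elim conjE)
  have Fm0: "\<forall>x\<in>F. \<forall>y\<in>F. mult x y \<in> F" using Ff unfolding mfilter_def by (elim conjE)
  have Fmult: "\<And>x y. x \<in> F \<Longrightarrow> y \<in> F \<Longrightarrow> mult x y \<in> F" using Fm0 by simp
  have one: "one \<in> Q" and top: "\<And>x. x \<in> Q \<Longrightarrow> le x one"
    and comm: "\<And>x y. x \<in> Q \<Longrightarrow> y \<in> Q \<Longrightarrow> mult x y = mult y x"
    and unit: "\<And>x. x \<in> Q \<Longrightarrow> mult one x = x"
    and multQ: "\<And>x y. x \<in> Q \<Longrightarrow> y \<in> Q \<Longrightarrow> mult x y \<in> Q"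
    and distr: "\<And>x A. x \<in> Q \<Longrightarrow> A \<noteq> {} \<Longrightarrow> A \<subseteq> Q \<Longrightarrow> mult x (js A) = js ((mult x) ` A)"
    using quantale_fields[OF q] by simp_all
  have fs0: "\<forall>x\<in>Q. f x \<noteq> {} \<and> f x \<subseteq> Q" using f unfolding susp_left_adjoint_def by (elim conjE)
  have fs: "\<And>x. x \<in> Q \<Longrightarrow> f x \<noteq> {} \<and> f x \<subseteq> Q" using fs0 by simp
  define W where "W = f one"
  have W: "W \<noteq> {}" "W \<subseteq> Q" using fs[OF one] W_def by auto
  have jW: "js W \<in> Q" using cs_js[OF csQ] W by blast
  have "js W = one"
    apply (rule cs_antisym[OF csQ jW one])
    using top jW apply blast
    using adj_below[OF csQ f one] W_def by simp
  moreover have "\<exists>t\<in>F. le_fin le js (mult t w) X"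
    if w: "w \<in> W" and X: "X \<noteq> {}" "X \<subseteq> Q" "js X \<in> F" for w X
  proof -
    have jX: "js X \<in> Q" using X FQ by blast
    have "mult (js X) one = js X" using comm[OF jX one] unit[OF jX] by simp
    then have "le (mult (js X) one) (js X)" using cs_refl[OF csQ jX] by simp
    then obtain P where P: "P \<noteq> {}" "P \<subseteq> F \<times> Q" "le one (js (snd ` P))"
      and Pp: "\<forall>(t, m')\<in>P. le_fin le js (mult t m') X"
      using nq X one unfolding normal_over_def by meson
    have "le_fin le js w (snd ` P)"
    proof -
      have "snd ` P \<subseteq> Q" using P(2) by force
      then show ?thesis using adj_le_fin[OF csQ f one, of w "snd ` P"] w W_def P by auto
    qed
    then obtain S0 where S0: "finite S0" "S0 \<noteq> {}" "S0 \<subseteq> snd ` P" "le w (js S0)"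
      unfolding le_fin_def by blast
    obtain P0 where P0: "P0 \<subseteq> P" "finite P0" "S0 = snd ` P0"
      using finite_subset_image[OF S0(1) S0(3)] by blast
    have P0ne: "P0 \<noteq> {}" using P0 S0 by auto
    have "\<exists>t\<in>F. \<forall>p\<in>P0. le t (fst p)" using P0(2) P0ne P0(1)
    proof (induction P0 rule: finite_ne_induct)
      case (singleton p)
      then have "fst p \<in> F" using P by auto
      then show ?case using cs_refl[OF csQ] FQ by auto
    next
      case (insert p P1)
      then obtain t where t: "t \<in> F" "\<forall>p\<in>P1. le t (fst p)" by auto
      have pF: "fst p \<in> F" using insert P by auto
      have tQ: "t \<in> Q" "fst p \<in> Q" using t pF FQ by auto
      have l1: "le (mult (fst p) t) t" "le (mult (fst p) t) (fst p)"
        using quantale_mult_le[OF q tQ(2) tQ(1)] by auto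
      have "\<forall>p'\<in>insert p P1. le (mult (fst p) t) (fst p')"
      proof
        fix p' assume "p' \<in> insert p P1"
        then show "le (mult (fst p) t) (fst p')"
        proof
          assume "p' = p" then show ?thesis using l1 by simp
        next
          assume p': "p' \<in> P1"
          then have "p' \<in> P" using insert.prems by auto
          then have "fst p' \<in> F" using P(2) by force
          then have "fst p' \<in> Q" using FQ by blast
          then show ?thesis using cs_trans[OF csQ _ tQ(1), of "mult (fst p) t" "fst p'"]
              multQ tQ l1 t p' by auto
        qed
      qed
      then show ?case using Fmult[OF pF t(1)] by blast
    qed
    then obtain t where t: "t \<in> F" "\<And>p. p \<in> P0 \<Longrightarrow> le t (fst p)" by blast
    have tQ: "t \<in> Q" using t FQ by blast
    have "snd ` P \<subseteq> Q" using P(2) by force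
    then have S0Q: "S0 \<subseteq> Q" using S0 by blast
    have wQ: "w \<in> Q" using w W by blast
    have jS0: "js S0 \<in> Q" using cs_js[OF csQ] S0 S0Q by blast
    have i1: "le (mult t w) (mult t (js S0))"
      using act_mono2[OF qm wQ jS0 S0(4) tQ] .
    have i2: "mult t (js S0) = js (mult t ` S0)" using distr tQ S0 S0Q by blast
    have i3: "le_fin le js (js (mult t ` S0)) X"
    proof (rule le_fin_union[OF csQ])
      show "finite (mult t ` S0)" "mult t ` S0 \<noteq> {}" "mult t ` S0 \<subseteq> Q" "X \<subseteq> Q"
        using S0 S0Q multQ tQ X by auto
      fix y assume "y \<in> mult t ` S0"
      then obtain p where p: "p \<in> P0" and y: "y = mult t (snd p)" using P0 by auto
      have pP: "fst p \<in> F" "snd p \<in> Q" using p P0 P by auto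
      have fpQ: "fst p \<in> Q" using pP FQ by blast
      have pP': "p \<in> P" using p P0 by blast
      obtain p1 p2 where pe: "p = (p1, p2)" by (cases p)
      have lf: "le_fin le js (mult (fst p) (snd p)) X" using Pp pP' unfolding pe by auto
      have "le (mult t (snd p)) (mult (fst p) (snd p))"
        using act_mono1[OF qm tQ fpQ t(2)[OF p] pP(2)] .
      then show "le_fin le js y X" unfolding y
        using le_fin_trans[OF csQ _ _ _ _ lf] multQ tQ fpQ pP X by auto
    qed
    have jm: "js (mult t ` S0) \<in> Q" using i2 multQ[OF tQ jS0] by simp
    have i1': "le (mult t w) (js (mult t ` S0))" using i1 i2 by simp
    have "le_fin le js (mult t w) X"
      using le_fin_trans[OF csQ multQ[OF tQ wQ] jm _ i1' i3] X by blast
    then show ?thesis using t by blast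
  qed
  ultimately show ?thesis unfolding locally_solid_def
    apply -
    apply (rule exI[of _ W])
    using W by blast
qed

lemma self_blooming:
  assumes bq: "blooming_quantale Q le js mult one"
  shows "blooming_module Q le js mult one Q le js mult"
proof -
  have q: "quantale Q le js mult one" using bq unfolding blooming_quantale_def by (elim conjE)
  have ex: "\<exists>f. susp_left_adjoint Q le js f \<and>
        (\<forall>a\<in>Q. \<forall>b\<in>Q. susp_eq le js (f (mult a b)) {mult s t | s t. s \<in> f a \<and> t \<in> f b})"
    using bq unfolding blooming_quantale_def by (elim conjE)
  then obtain f where f: "susp_left_adjoint Q le js f"
    and fm: "\<forall>a\<in>Q. \<forall>b\<in>Q. susp_eq le js (f (mult a b)) {mult s t | s t. s \<in> f a \<and> t \<in> f b}"
    by (elim exE conjE)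
  show ?thesis unfolding blooming_module_def
    apply (intro conjI exI)
    apply (rule bq)
    apply (rule quantale_self_module[OF q])
    apply (rule f)
    apply (rule f)
    apply (rule fm)
    done
qed

theorem mainTheorem12:
  fixes Q :: "'a set" and le :: "'a \<Rightarrow> 'a \<Rightarrow> bool" and js :: "'a set \<Rightarrow> 'a"
    and mult :: "'a \<Rightarrow> 'a \<Rightarrow> 'a" and one :: 'a and F :: "'a set"
  assumes "blooming_quantale Q le js mult one"
    and "mfilter Q le mult one F"
  shows "(normal_over F Q le js mult \<longleftrightarrow> locally_solid Q le js mult one F)
    \<and> (locally_solid Q le js mult one F \<longrightarrow>
         (\<forall>(M :: 'm set) leM jsM act. blooming_module Q le js mult one M leM jsM act \<longrightarrow>
            normal_over F M leM jsM act))
    \<and> ((\<forall>(M :: 'a set) leM jsM act. blooming_module Q le js mult one M leM jsM act \<longrightarrow>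
            normal_over F M leM jsM act) \<longrightarrow> normal_over F Q le js mult)"
proof (intro conjI impI allI iffI)
  show "locally_solid Q le js mult one F" if "normal_over F Q le js mult"
    using a_to_b[OF assms that] .
  show "normal_over F Q le js mult" if "locally_solid Q le js mult one F"
    using b_to_c[OF assms(2) that self_blooming[OF assms(1)]] .
  fix M :: "'m set" and leM jsM act
  assume "locally_solid Q le js mult one F" "blooming_module Q le js mult one M leM jsM act"
  then show "normal_over F M leM jsM act" using b_to_c[OF assms(2)] by blast
next
  assume "\<forall>(M :: 'a set) leM jsM act. blooming_module Q le js mult one M leM jsM act \<longrightarrow>
            normal_over F M leM jsM act"
  then show "normal_over F Q le js mult" using self_blooming[OF assms(1)] by blast
qed

end
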